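(* Let $n\in\mathbb{Z}^+$ with $n\geq 2$ and let $\Psi_n:\mathbb{R}\to\mathbb{R}$ be the polynomial of degree $n+4$ $$\Psi_n(t)=\frac{1}{(n+3)(n+4)}\left(t^{n+4}-1\right)+\frac{1}{n(n+1)}t^2\left(t^n-1\right)-\frac{2}{(n+1)(n+3)}t\left(t^{n+2}-1\right).$$ Then $\Psi_n(t)=\sum_{k=5}^{n+4}\frac{\Psi_n^{(k)}(1)}{k!}(t-1)^k$ for all $t\in\mathbb{R}$, and $\Psi_n^{(k)}(1)>0$ for all $5\leq k\leq n+4$. *)

theory Defs
  imports "HOL-Analysis.Analysis"
begin

definition Psi :: "nat \<Rightarrow> real \<Rightarrow> real" where
  "Psi n t = 1 / (real (n+3) * real (n+4)) * (t ^ (n+4) - 1)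
           + 1 / (real n * real (n+1)) * t\<^sup>2 * (t ^ n - 1)
           - 2 / (real (n+1) * real (n+3)) * t * (t ^ (n+2) - 1)"

end

theory Submission imports Defs begin

lemma deriv_iter:
  fixes c :: "nat \<Rightarrow> real"
  shows "(deriv ^^ k) (\<lambda>t. \<Sum>j\<le>N. c j * (t-1)^j) = (\<lambda>t::real. \<Sum>j\<le>N. c j * (\<Prod>i<k. real (j - i)) * (t-1)^(j-k))"
proof (induction k)
  case 0
  then show ?case by simp
next
  case (Suc k)
  show ?case
  proof
    fix t :: real
    have "((\<lambda>t. \<Sum>j\<le>N. c j * (\<Prod>i<k. real (j - i)) * (t-1)^(j-k)) has_real_derivative
       (\<Sum>j\<le>N. c j * (\<Prod>i<k. real (j - i)) * (real (j-k) * (t-1)^(j-k-1)))) (at t)"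
      by (auto intro!: derivative_eq_intros) (simp add: mult_ac)
    then have "deriv (\<lambda>t. \<Sum>j\<le>N. c j * (\<Prod>i<k. real (j - i)) * (t-1)^(j-k)) t
       = (\<Sum>j\<le>N. c j * (\<Prod>i<k. real (j - i)) * (real (j-k) * (t-1)^(j-k-1)))"
      by (rule DERIV_imp_deriv)
    also have "\<dots> = (\<Sum>j\<le>N. c j * (\<Prod>i<Suc k. real (j - i)) * (t-1)^(j-Suc k))"
      by (intro sum.cong refl) (simp add: algebra_simps)
    finally show "(deriv ^^ Suc k) (\<lambda>t. \<Sum>j\<le>N. c j * (t-1)^j) t = (\<Sum>j\<le>N. c j * (\<Prod>i<Suc k. real (j - i)) * (t-1)^(j-Suc k))"
      using Suc by simp
  qed
qed

lemma prod_fact: "(\<Prod>i<k. real (k - i)) = fact k"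
proof (induction k)
  case 0 then show ?case by simp
next
  case (Suc k)
  have "(\<Prod>i<Suc k. real (Suc k - i)) = real (Suc k) * (\<Prod>i<k. real (k - i))"
    by (subst prod.lessThan_Suc_shift) simp
  then show ?case using Suc by simp
qed

lemma deriv_iter_at1:
  fixes c :: "nat \<Rightarrow> real"
  assumes "k \<le> N"
  shows "(deriv ^^ k) (\<lambda>t. \<Sum>j\<le>N. c j * (t-1)^j) 1 = c k * fact k"
proof -
  have "(deriv ^^ k) (\<lambda>t. \<Sum>j\<le>N. c j * (t-1)^j) 1 = (\<Sum>j\<le>N. c j * (\<Prod>i<k. real (j - i)) * (1-1::real)^(j-k))"
    by (simp add: deriv_iter)
  also have "\<dots> = (\<Sum>j\<in>{k}. c j * (\<Prod>i<k. real (j - i)) * (1-1::real)^(j-k))"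
  proof (rule sum.mono_neutral_right)
    show "\<forall>j\<in>{..N} - {k}. c j * (\<Prod>i<k. real (j - i)) * (1-1::real)^(j-k) = 0"
    proof
      fix j assume j: "j \<in> {..N} - {k}"
      show "c j * (\<Prod>i<k. real (j - i)) * (1-1::real)^(j-k) = 0"
      proof (cases "j < k")
        case True
        then have "(\<Prod>i<k. real (j - i)) = 0" by (intro prod_zero) auto
        then show ?thesis by simp
      next
        case False
        then show ?thesis using j by auto
      qed
    qed
  qed (use assms in auto)
  also have "\<dots> = c k * (\<Prod>i<k. real (k - i))" by (simp del: of_nat_diff)
  also have "\<dots> = c k * fact k" by (simp only: prod_fact)
  finally show ?thesis .
qed

lemma mono_expand:
  assumes "m \<le> N"
  shows "(t::real)^m = (\<Sum>j\<le>N. real (m choose j) * (t-1)^j)"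
proof -
  have "t^m = ((t-1)+1)^m" by simp
  also have "\<dots> = (\<Sum>j\<le>m. real (m choose j) * (t-1)^j)"
    by (subst binomial_ring) simp
  also have "\<dots> = (\<Sum>j\<le>N. real (m choose j) * (t-1)^j)"
    by (rule sum.mono_neutral_left) (use assms in auto)
  finally show ?thesis .
qed

lemma choose_prod: "real (m choose j) * fact j = (\<Prod>i<j. real (m - i))"
proof (induction j arbitrary: m)
  case 0 then show ?case by simp
next
  case (Suc j)
  show ?case
  proof (cases m)
    case 0
    then show ?thesis by (simp add: prod.lessThan_Suc_shift)
  next
    case (Suc m')
    have "real (Suc j) * real (Suc m' choose Suc j) = real (Suc m') * real (m' choose j)"
      using Suc_times_binomial[of j m'] by (metis of_nat_mult)
    have "real (Suc m' choose Suc j) * fact (Suc j) = (real (Suc j) * real (Suc m' choose Suc j)) * fact j"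
      by (simp only: fact_Suc mult_ac)
    also have "\<dots> = real (Suc m') * (real (m' choose j) * fact j)"
      by (simp only: \<open>real (Suc j) * real (Suc m' choose Suc j) = real (Suc m') * real (m' choose j)\<close> mult_ac)
    also have "\<dots> = real (Suc m') * (\<Prod>i<j. real (Suc m' - Suc i))"
      using Suc.IH[of m'] by simp
    also have "\<dots> = (\<Prod>i<Suc j. real (Suc m' - i))"
      unfolding prod.lessThan_Suc_shift by simp
    finally show ?thesis using Suc by simp
  qed
qed


theorem lemma2p3:
  fixes n :: nat
  assumes "n \<ge> 2"
  shows "(\<forall>t::real. Psi n t = (\<Sum>k=5..n+4. (deriv ^^ k) (Psi n) 1 / fact k * (t - 1) ^ k))
         \<and> (\<forall>k. 5 \<le> k \<and> k \<le> n + 4 \<longrightarrow> (deriv ^^ k) (Psi n) 1 > 0)"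
proof -
  define p where "p = 1 / (real (n+3) * real (n+4))"
  define q where "q = 1 / (real n * real (n+1))"
  define r where "r = 2 / (real (n+1) * real (n+3))"
  define E where "E j = p*real(n+4 choose j) - p*real(0 choose j) + q*real(n+2 choose j)
     - q*real(2 choose j) - r*real(n+3 choose j) + r*real(1 choose j)" for j
  have n2: "real n \<ge> 2" using assms by simp
  have psi_eq: "Psi n = (\<lambda>t. \<Sum>j\<le>n+4. E j * (t-1)^j)"
  proof
    fix t :: real
    have "Psi n t = p*t^(n+4) - p*t^0 + q*t^(n+2) - q*t^2 - r*t^(n+3) + r*t^1"
    proof -
      have "Psi n t = p*(t^(n+4)-1) + q*t^2*(t^n-1) - r*t*(t^(n+2)-1)"
        unfolding Psi_def p_def q_def r_def by simp
      then show ?thesis by (simp add: power_add power2_eq_square eval_nat_numeral algebra_simps)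
    qed
    also have "\<dots> = p*(\<Sum>j\<le>n+4. real (n+4 choose j) * (t-1)^j) - p*(\<Sum>j\<le>n+4. real (0 choose j) * (t-1)^j)
       + q*(\<Sum>j\<le>n+4. real (n+2 choose j) * (t-1)^j) - q*(\<Sum>j\<le>n+4. real (2 choose j) * (t-1)^j)
       - r*(\<Sum>j\<le>n+4. real (n+3 choose j) * (t-1)^j) + r*(\<Sum>j\<le>n+4. real (1 choose j) * (t-1)^j)"
    proof -
      have e1: "t^(n+4) = (\<Sum>j\<le>n+4. real (n+4 choose j) * (t-1)^j)" by (rule mono_expand) simp
      have e2: "t^0 = (\<Sum>j\<le>n+4. real (0 choose j) * (t-1)^j)" by (rule mono_expand) simp
      have e3: "t^(n+2) = (\<Sum>j\<le>n+4. real (n+2 choose j) * (t-1)^j)" by (rule mono_expand) simp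
      have e4: "t^2 = (\<Sum>j\<le>n+4. real (2 choose j) * (t-1)^j)" by (rule mono_expand) simp
      have e5: "t^(n+3) = (\<Sum>j\<le>n+4. real (n+3 choose j) * (t-1)^j)" by (rule mono_expand) simp
      have e6: "t^1 = (\<Sum>j\<le>n+4. real (1 choose j) * (t-1)^j)" by (rule mono_expand) simp
      show ?thesis by (simp only: e1 e2 e3 e4 e5 e6)
    qed
    also have "\<dots> = (\<Sum>j\<le>n+4. E j * (t-1)^j)"
      unfolding E_def by (simp add: algebra_simps sum.distrib sum_subtractf sum_distrib_left)
    finally show "Psi n t = (\<Sum>j\<le>n+4. E j * (t-1)^j)" .
  qed
  have cp: "real (m choose j) = (\<Prod>i<j. real (m - i)) / fact j" for m j
    using choose_prod[of m j] by (simp add: field_simps del: of_nat_diff)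
  have nz: "real n \<noteq> 0" "real n + 1 \<noteq> 0" "real n + 3 \<noteq> 0" "real n + 4 \<noteq> 0"
        "1 + real n \<noteq> 0" "3 + real n \<noteq> 0" "4 + real n \<noteq> 0" using n2 by linarith+
  define D where "D = real n * (real n + 1) * (real n + 3) * (real n + 4)"
  have Dnz: "D \<noteq> 0" unfolding D_def using nz by simp
  have cancel: "u \<noteq> 0 \<Longrightarrow> c / u * (w * u) = c * w" for u w c :: real by simp
  have pD: "p * D = real n * (real n + 1)"
  proof -
    have "p = 1 / ((real n + 3) * (real n + 4))" unfolding p_def by simp
    moreover have "D = (real n * (real n + 1)) * ((real n + 3) * (real n + 4))" unfolding D_def by (simp only: mult_ac)
    ultimately show ?thesis using cancel[of "(real n + 3) * (real n + 4)" 1] nz by simp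
  qed
  have qD: "q * D = (real n + 3) * (real n + 4)"
  proof -
    have "q = 1 / (real n * (real n + 1))" unfolding q_def by simp
    moreover have "D = ((real n + 3) * (real n + 4)) * (real n * (real n + 1))" unfolding D_def by (simp only: mult_ac)
    ultimately show ?thesis using cancel[of "real n * (real n + 1)" 1] nz by simp
  qed
  have rD: "r * D = 2 * real n * (real n + 4)"
  proof -
    have "r = 2 / ((real n + 1) * (real n + 3))" unfolding r_def by simp
    moreover have "D = (real n * (real n + 4)) * ((real n + 1) * (real n + 3))" unfolding D_def by (simp only: mult_ac)
    ultimately show ?thesis using cancel[of "(real n + 1) * (real n + 3)" 2] nz by simp
  qed
  have ED: "E j * D = real n * (real n + 1) * (real(n+4 choose j) - real(0 choose j))
     + (real n + 3) * (real n + 4) * (real(n+2 choose j) - real(2 choose j))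
     - 2 * real n * (real n + 4) * (real(n+3 choose j) - real(1 choose j))" for j
    unfolding E_def pD[symmetric] qD[symmetric] rD[symmetric] by (simp add: algebra_simps)
  have "E j * D = 0" if "j \<le> 4" for j
  proof -
    have "j = 0 \<or> j = 1 \<or> j = 2 \<or> j = 3 \<or> j = 4" using that by auto
    then show ?thesis unfolding ED cp using n2
      by (auto simp: eval_nat_numeral lessThan_Suc field_simps of_nat_diff)
  qed
  then have Ej: "E j = 0" if "j \<le> 4" for j using Dnz that by simp
  note E0 = Ej
  have D: "(deriv ^^ k) (Psi n) 1 = E k * fact k" if "k \<le> n+4" for k
    unfolding psi_eq by (rule deriv_iter_at1[OF that])
  have part1: "Psi n t = (\<Sum>k=5..n+4. (deriv ^^ k) (Psi n) 1 / fact k * (t - 1) ^ k)" for t :: real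
  proof -
    have "Psi n t = (\<Sum>j\<le>n+4. E j * (t-1)^j)" by (simp add: psi_eq)
    also have "\<dots> = (\<Sum>j=5..n+4. E j * (t-1)^j)"
      by (rule sum.mono_neutral_right) (auto simp: E0)
    also have "\<dots> = (\<Sum>k=5..n+4. (deriv ^^ k) (Psi n) 1 / fact k * (t - 1) ^ k)"
      by (intro sum.cong refl) (simp add: D)
    finally show ?thesis .
  qed
  have Epos: "E k > 0" if kk: "5 \<le> k" "k \<le> n+4" for k
  proof -
    have Ek: "E k = p*real(n+4 choose k) + q*real(n+2 choose k) - r*real(n+3 choose k)"
      unfolding E_def using that by (simp add: binomial_eq_0)
    consider "k \<le> n+2" | "k = n+3" | "k = n+4" using kk by fastforce
    then show ?thesis
    proof cases
      case 1
      define x where "x = n+3-k"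
      have x1: "x \<ge> 1" and xn: "x + 2 \<le> n" using 1 kk unfolding x_def by auto
      define B where "B = real (n+2 choose k)"
      have Bpos: "B > 0" unfolding B_def using 1 by simp
      have X: "real (n+3 choose k) * real x = real (n+3) * B"
        using binomial_absorb_comp[of "n+3" k] unfolding x_def B_def
        by (metis (no_types, lifting) add_diff_cancel_right' add_Suc_right numeral_3_eq_3 numeral_2_eq_2
             of_nat_mult mult.commute add_2_eq_Suc' diff_Suc_1)
      have Y: "real (n+4 choose k) * (real x + 1) = real (n+4) * real (n+3 choose k)"
      proof -
        have "(n+4-k) * (n+4 choose k) = (n+4) * (n+3 choose k)"
          using binomial_absorb_comp[of "n+4" k] by (simp add: add.commute)
        moreover have "n+4-k = x+1" unfolding x_def using 1 by simp
        ultimately show ?thesis by (metis of_nat_mult of_nat_Suc add.commute mult.commute Suc_eq_plus1)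
      qed
      have xr: "real x \<ge> 1" "real x + 2 \<le> real n" using x1 xn by linarith+
      define Xc where "Xc = real (n+3 choose k)"
      define Yc where "Yc = real (n+4 choose k)"
      have X2: "Xc * real x = (real n + 3) * B" using X unfolding Xc_def by simp
      have Y2: "Yc * (real x + 1) = (real n + 4) * Xc" using Y unfolding Xc_def Yc_def by simp
      have EDk: "E k * D = real n * (real n + 1) * Yc + (real n + 3) * (real n + 4) * B - 2 * real n * (real n + 4) * Xc"
        unfolding ED Xc_def Yc_def B_def using kk by (simp add: binomial_eq_0)
      have "E k * D * (real x * (real x + 1)) = real n * (real n + 1) * real x * (Yc * (real x + 1))
          + (real n + 3) * (real n + 4) * B * (real x * (real x + 1)) - 2 * real n * (real n + 4) * (real x + 1) * (Xc * real x)"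
        unfolding EDk by (simp add: algebra_simps)
      also have "\<dots> = real n * (real n + 1) * (real n + 4) * (Xc * real x)
          + (real n + 3) * (real n + 4) * B * (real x * (real x + 1)) - 2 * real n * (real n + 4) * (real x + 1) * (Xc * real x)"
        unfolding Y2 by (simp add: algebra_simps)
      also have "\<dots> = (real n + 3) * (real n + 4) * B * ((real n - real x) * (real n - real x - 1))"
        unfolding X2 by (simp add: algebra_simps)
      finally have EE: "E k * D * (real x * (real x + 1)) = (real n + 3) * (real n + 4) * B * ((real n - real x) * (real n - real x - 1))" .
      have "(real n - real x) * (real n - real x - 1) > 0" using xr by (intro mult_pos_pos) auto
      then have "E k * D * (real x * (real x + 1)) > 0" unfolding EE using Bpos n2 by simp
      moreover have "D > 0" unfolding D_def using n2 by simp
      moreover have "real x * (real x + 1) > 0" using xr by simp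
      ultimately show ?thesis by (simp add: zero_less_mult_iff)
    next
      case 2
      have s4: "n+4 = Suc (n+3)" by simp
      have c4: "n+4 choose (n+3) = n+4" unfolding s4 by (rule binomial_Suc_n)
      have "E k = p * real (n+4) - r"
        using Ek unfolding 2 c4 by (simp add: binomial_eq_0)
      moreover have "p * real (n+4) = 1 / (real n + 3)" unfolding p_def using nz by simp
      moreover have "r = (2 / (real n + 1)) * (1 / (real n + 3))" unfolding r_def by simp
      moreover have "2 / (real n + 1) < 1" using n2 by simp
      moreover have "1 / (real n + 3) > 0" using n2 by simp
      ultimately show ?thesis by (metis diff_gt_0_iff_gt mult_strict_right_mono mult_1 mult.commute)
    next
      case 3
      have "E k = p" using Ek unfolding 3 by (simp add: binomial_eq_0)
      then show ?thesis unfolding p_def by simp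
    qed
  qed
  show ?thesis
    using part1 Epos D by auto
qed

end
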